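(* Define the generating function $f(\lambda,\xi)=\sum_{n\ge-4}\xi^{n-2}f_{1-n}(\lambda)$. Then $$f(\lambda,\xi)=\Big(\frac\lambda\xi\Big)^6\frac{\varphi_\lambda(\lambda)}{\lambda-\xi}+\frac{\varphi_\xi(\xi)^2}{\varphi(\xi)-\varphi(\lambda)},$$ where $\frac1{\lambda-\xi}$ is expanded as $\sum_{m\ge0}\xi^m\lambda^{-m-1}$ and $\frac1{\varphi(\xi)-\varphi(\lambda)}$ as $\sum_{k\ge0}\varphi(\lambda)^k\varphi(\xi)^{-k-1}$. Moreover, writing $f(\lambda,\xi)=\sum_{i\ge1}f^{(i)}(\xi)\lambda^i$, one has $$f^{(1)}=-\varphi_\xi(\xi)^2,\qquad f^{(2)}=-\varphi_\xi(\xi)^2\varphi(\xi),\qquad f^{(3)}=\varphi_\xi(\xi)^2\big(\varphi^{(1)}-\varphi(\xi)^2\big).$$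
   Context: Let $\varphi^{(1)},\varphi^{(2)},\dots$ be independent variables, $\varphi(\lambda)=1/\lambda+\sum_{k\ge1}\varphi^{(k)}\lambda^k$ and $\varphi(\xi)=1/\xi+\sum_{k\ge1}\varphi^{(k)}\xi^k$ (same coefficients, two formal parameters $\lambda,\xi$), $\varphi_\lambda=d\varphi(\lambda)/d\lambda$, $\varphi_\xi=d\varphi(\xi)/d\xi$. Notation $\mathfrak P_\varphi$: with $w=1/\varphi(\lambda)=\lambda+O(\lambda^3)$, any Laurent series $F$ in $\lambda$ with finitely many negative powers is uniquely $F=\sum_{k\le m}c_k\varphi(\lambda)^k$ with $c_k$ independent of $\lambda$; $\mathfrak P_\varphi F=F-\sum_{k=0}^mc_k\varphi(\lambda)^k$ (a power series in $\lambda$ without constant term). For $n\in\mathbb Z$, $f_n(\lambda)=\mathfrak P_\varphi(\lambda^n\varphi_\lambda)$. Identities are understood in the ring of formal series in $\xi$ with powers bounded below whose coefficients are Laurent series in $\lambda$ with finitely many negative powers; $f^{(i)}(\xi)=\sum_{n\ge-4}\xi^{n-2}\,[\lambda^i]f_{1-n}$. *)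

theory Defs
  imports "HOL-Computational_Algebra.Formal_Laurent_Series"
begin

text \<open>Polymorphic in the coefficient ring, so it can be used both as phi(lambda)
  (coefficients c k) and as phi(xi) over the ring of Laurent series in lambda
  (coefficients fls_const (c k)).\<close>
definition phi :: "(nat \<Rightarrow> 'a::comm_ring_1) \<Rightarrow> 'a fls" where
  "phi c = fls_X_inv + fps_to_fls (Abs_fps (\<lambda>n. if n = 0 then 0 else c n))"

definition phi_nonneg_part :: "(nat \<Rightarrow> 'a::field) \<Rightarrow> 'a fls \<Rightarrow> 'a fls" where
  "phi_nonneg_part c F = (THE p. (\<exists>(N::nat) (d::nat \<Rightarrow> 'a).
       p = (\<Sum>k\<le>N. fls_const (d k) * phi c ^ k)) \<and>
       (F - p = 0 \<or> fls_subdegree (F - p) \<ge> 1))"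

definition phi_proj :: "(nat \<Rightarrow> 'a::field) \<Rightarrow> 'a fls \<Rightarrow> 'a fls" where
  "phi_proj c F = F - phi_nonneg_part c F"

definition fn_ser :: "(nat \<Rightarrow> 'a::field) \<Rightarrow> int \<Rightarrow> 'a fls" where
  "fn_ser c n = phi_proj c (fls_X_intpow n * fls_deriv (phi c))"

text \<open>Generating function f(lambda,xi) = sum_{n>=-4} xi^(n-2) f_{1-n}(lambda),
  an element of the ring of Laurent series in xi over Laurent series in lambda.
  The coefficient of xi^j (j >= -6) is f_{-1-j} = f_{5-m} with m = j + 6.\<close>
definition gen_f :: "(nat \<Rightarrow> 'a::field) \<Rightarrow> 'a fls fls" where
  "gen_f c = fls_shift 6 (fps_to_fls (Abs_fps (\<lambda>m. fn_ser c (5 - int m))))"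

definition f_coef :: "(nat \<Rightarrow> 'a::field) \<Rightarrow> int \<Rightarrow> 'a fls" where
  "f_coef c i = fls_shift 6 (fps_to_fls (Abs_fps (\<lambda>m. fls_nth (fn_ser c (5 - int m)) i)))"

end

theory Submission
  imports Defs
begin

unbundle fps_syntax

lemma phi_nth: "phi c $$ n = (if n = -1 then 1 else if n \<le> 0 then 0 else c (nat n))"
  unfolding phi_def by (auto simp: fps_to_fls_nth)

lemma phi_nz: "(phi c :: 'a::field fls) \<noteq> 0"
  by (rule fls_nonzeroI[of _ "-1"]) (simp add: phi_nth)

lemma phi_subdeg: "fls_subdegree (phi c :: 'a::field fls) = -1"
  by (rule fls_subdegree_eqI) (auto simp: phi_nth)

lemma dphi_nth: "fls_deriv (phi c) $$ n = (if n = -2 then -1 else if n \<le> -1 then 0 else of_int (n+1) * c (nat (n+1)))"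
  by (auto simp: phi_nth)

lemma dphi_nz: "fls_deriv (phi c :: 'a::field_char_0 fls) \<noteq> 0"
  by (rule fls_nonzeroI[of _ "-2"]) (simp add: phi_nth)

lemma dphi_subdeg: "fls_subdegree (fls_deriv (phi c) :: 'a::field_char_0 fls) = -2"
  by (rule fls_subdegree_eqI) (auto simp: phi_nth)

definition cmap :: "'a::field fls \<Rightarrow> 'a fls fls" where
  "cmap f = Abs_fls (\<lambda>n. fls_const (f $$ n))"

lemma cmap_nth [simp]: "cmap f $$ n = fls_const (f $$ n)"
proof -
  have "\<forall>\<^sub>\<infinity>n::nat. f $$ (- int n) = 0" by simp
  then have "\<forall>\<^sub>\<infinity>n::nat. fls_const (f $$ (- int n)) = 0"
    by (rule MOST_mono) simp
  then show ?thesis unfolding cmap_def by simp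
qed

lemma cmap_zero [simp]: "cmap 0 = 0"
  by (auto simp: fls_eq_iff)

lemma cmap_eq0_iff [simp]: "cmap f = 0 \<longleftrightarrow> f = 0"
  by (auto simp: fls_eq_iff)

lemma cmap_subdeg [simp]: "fls_subdegree (cmap f) = fls_subdegree f"
proof (cases "f = 0")
  case True then have "cmap f = 0" by simp
  then show ?thesis by (simp add: True)
next
  case False then show ?thesis by (intro fls_subdegree_eqI) auto
qed

lemma cmap_add [simp]: "cmap (f + g) = cmap f + cmap g"
  by (auto simp: fls_eq_iff fls_plus_const)

lemma cmap_one [simp]: "cmap 1 = 1"
  by (auto simp: fls_eq_iff)

lemma fls_const_sum: "fls_const (\<Sum>i\<in>A. f i) = (\<Sum>i\<in>A. fls_const (f i))"
  by (induction A rule: infinite_finite_induct) (auto simp: fls_plus_const[symmetric])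

lemma cmap_mult [simp]: "cmap (f * g) = cmap f * cmap g"
proof (rule fls_eqI)
  fix n
  show "cmap (f * g) $$ n = (cmap f * cmap g) $$ n"
    by (simp add: fls_times_nth(1) fls_const_sum fls_const_mult_const)
qed

lemma cmap_power [simp]: "cmap (f ^ n) = cmap f ^ n"
  by (induction n) auto

lemma cmap_inverse [simp]: "cmap (inverse f) = inverse (cmap f)"
proof (cases "f = 0")
  case True then show ?thesis by simp
next
  case False
  have "cmap f * cmap (inverse f) = 1"
    by (simp flip: cmap_mult add: False)
  then show ?thesis by (simp add: inverse_unique)
qed

lemma cmap_deriv: "cmap (fls_deriv f) = fls_deriv (cmap f)"
  by (auto simp: fls_eq_iff fls_of_int fls_const_mult_const)

lemma cmap_phi: "cmap (phi c) = phi (\<lambda>k. fls_const (c k))"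
  by (auto simp: fls_eq_iff phi_nth)


lemma phi_inv: "phi c * inverse (phi c) = (1 :: 'a::field fls)"
  by (rule right_inverse[OF phi_nz])

lemma phi_pow_nth_low: "n < - int k \<Longrightarrow> (phi c ^ k :: 'a::field fls) $$ n = 0"
  by (rule fls_eq0_below_subdegree) (simp add: fls_subdegree_pow phi_subdeg)

lemma phi_pow_nth_lead: "(phi c ^ k :: 'a::field fls) $$ (- int k) = 1"
  using fls_pow_base[of "phi c" k] by (simp add: phi_subdeg phi_nth)

lemma winv_subdeg: "fls_subdegree (inverse (phi c) :: 'a::field fls) = 1"
  by (simp add: phi_subdeg)

lemma winv_lead: "(inverse (phi c) :: 'a::field fls) $$ 1 = 1"
  using fls_inverse_subdegree_base[of "phi c"] by (simp add: phi_subdeg phi_nth)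

lemma winv_nz: "(inverse (phi c) :: 'a::field fls) \<noteq> 0"
  using phi_nz by simp

lemma res_of_nat_zero:
  fixes f :: "'a::field_char_0 fls"
  assumes "fls_residue (of_nat (Suc m) * f) = 0"
  shows "fls_residue f = 0"
proof -
  from assms have "of_nat (Suc m) * fls_residue f = 0"
    by (simp only: fls_residue_def fls_of_nat fls_mult_const_nth)
  then show ?thesis by (simp only: mult_eq_0_iff of_nat_eq_0_iff) simp
qed

lemma res_dphi_pow: "fls_residue (phi c ^ m * fls_deriv (phi c) :: 'a::field_char_0 fls) = 0"
proof -
  have "fls_deriv (phi c ^ Suc m) = of_nat (Suc m) * phi c ^ m * (fls_deriv (phi c) :: 'a fls)"
    by (simp only: fls_deriv_power diff_Suc_1)
  then have "fls_deriv (phi c ^ Suc m) = of_nat (Suc m) * (phi c ^ m * fls_deriv (phi c) :: 'a fls)"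
    by (simp only: mult.assoc)
  then have "fls_residue (of_nat (Suc m) * (phi c ^ m * fls_deriv (phi c) :: 'a fls)) = 0"
    by (metis fls_residue_deriv)
  then show ?thesis by (rule res_of_nat_zero)
qed

lemma res_dphi_invpow:
  "fls_residue (fls_deriv (phi c) * inverse (phi c) ^ (m+2) :: 'a::field_char_0 fls) = 0"
proof -
  let ?w = "inverse (phi c) :: 'a fls"
  have "fls_deriv (?w ^ Suc m) = of_nat (Suc m) * ?w ^ m * fls_deriv ?w"
    by (simp only: fls_deriv_power diff_Suc_1)
  also have "\<dots> = - (of_nat (Suc m) * (fls_deriv (phi c) * ?w ^ (m+2)))"
    by (simp add: fls_inverse_deriv power_add power2_eq_square algebra_simps)
  finally have "fls_residue (of_nat (Suc m) * (fls_deriv (phi c) * ?w ^ (m+2))) = 0"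
    by (metis fls_residue_deriv fls_uminus_nth fls_residue_def neg_equal_0_iff_equal)
  then show ?thesis by (rule res_of_nat_zero)
qed

lemma res_R:
  "fls_residue (phi c ^ k * fls_deriv (phi c) * inverse (phi c) ^ (i+1) :: 'a::field_char_0 fls)
     = (if k = i then -1 else 0)"
proof -
  let ?p = "phi c :: 'a fls" and ?w = "inverse (phi c) :: 'a fls" and ?d = "fls_deriv (phi c) :: 'a fls"
  have pw: "?p ^ n * ?w ^ n = 1" for n by (simp add: phi_inv flip: power_mult_distrib)
  consider "k = i" | "i < k" | "k < i" by linarith
  then show ?thesis
  proof cases
    case 1
    have "?p ^ k * ?d * ?w ^ (i+1) = ?d * ?w * (?p ^ k * ?w ^ k)"
      using 1 by (simp add: algebra_simps)
    also have "\<dots> = ?d * ?w" by (simp add: pw)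
    finally have e: "?p ^ k * ?d * ?w ^ (i+1) = ?d * ?w" .
    show ?thesis unfolding e using 1 fls_residue_deriv_times_inverse_eq_subdegree(1)[of ?p]
      by (simp add: phi_subdeg)
  next
    case 2
    then obtain m where m: "k = m + (i+1)" by (metis add.commute less_imp_Suc_add Suc_eq_plus1 add_Suc_right)
    have "?p ^ k * ?d * ?w ^ (i+1) = ?p ^ m * ?d * (?p ^ (i+1) * ?w ^ (i+1))"
      unfolding m by (simp add: power_add algebra_simps)
    also have "\<dots> = ?p ^ m * ?d" by (simp only: pw mult_1_right)
    finally have e: "?p ^ k * ?d * ?w ^ (i+1) = ?p ^ m * ?d" .
    show ?thesis unfolding e using 2 res_dphi_pow[where m=m and c=c] by simp
  next
    case 3
    then obtain m where m: "i + 1 = k + (m+2)" by (metis add.commute less_imp_Suc_add Suc_eq_plus1 add_Suc_right add_2_eq_Suc')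
    have "?p ^ k * ?d * ?w ^ (i+1) = ?d * ?w ^ (m+2) * (?p ^ k * ?w ^ k)"
      unfolding m by (simp add: power_add algebra_simps)
    also have "\<dots> = ?d * ?w ^ (m+2)" by (simp only: pw mult_1_right)
    finally have e: "?p ^ k * ?d * ?w ^ (i+1) = ?d * ?w ^ (m+2)" .
    show ?thesis unfolding e using 3 res_dphi_invpow[where m=m and c=c] by simp
  qed
qed


lemma res_expand:
  "fls_residue ((F + (\<Sum>k\<le>K. fls_const (a k) * phi c ^ k)) * Y) =
   fls_residue (F * Y) + (\<Sum>k\<le>K. a k * fls_residue (phi c ^ k * (Y :: 'a::field fls)))"
  by (simp add: distrib_right sum_distrib_right fls_nth_sum mult.assoc)

lemma fls_times_nth_bounds:
  fixes f g :: "'a::field fls"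
  assumes fa: "\<forall>n<a. f$$n = 0" and gb: "\<forall>n<b. g$$n = 0"
  shows "(f*g) $$ n = (\<Sum>i=a..n-b. f$$i * g$$(n-i))"
proof (cases "f = 0 \<or> g = 0")
  case True then show ?thesis by auto
next
  case False
  then have nz: "f \<noteq> 0" "g \<noteq> 0" by auto
  have df: "a \<le> fls_subdegree f" using fa nz by (intro fls_subdegree_geI) auto
  have dg: "b \<le> fls_subdegree g" using gb nz by (intro fls_subdegree_geI) auto
  have "(f*g) $$ n = (\<Sum>i=fls_subdegree f..n - fls_subdegree g. f $$ i * g $$ (n - i))"
    by (rule fls_times_nth(2))
  also have "\<dots> = (\<Sum>i=a..n-b. f$$i * g$$(n-i))"
  proof (rule sum.mono_neutral_left)
    show "finite {a..n-b}" by simp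
    show "{fls_subdegree f..n - fls_subdegree g} \<subseteq> {a..n-b}" using df dg by auto
    show "\<forall>i\<in>{a..n - b} - {fls_subdegree f..n - fls_subdegree g}. f $$ i * g $$ (n - i) = 0"
    proof
      fix i assume "i \<in> {a..n - b} - {fls_subdegree f..n - fls_subdegree g}"
      then have "i < fls_subdegree f \<or> n - i < fls_subdegree g" by auto
      then show "f $$ i * g $$ (n - i) = 0" by auto
    qed
  qed
  finally show ?thesis .
qed

lemma core:
  fixes F :: "'a::field_char_0 fls" and c :: "nat \<Rightarrow> 'a"
  assumes low: "\<forall>n < - int K. F $$ n = 0"
  defines "G \<equiv> F + (\<Sum>k\<le>K. fls_const (fls_residue (F * fls_deriv (phi c) * inverse (phi c) ^ (k+1))) * phi c ^ k)"
  assumes n: "n \<le> 0"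
  shows "G $$ n = 0"
proof (rule ccontr)
  let ?p = "phi c :: 'a fls" and ?w = "inverse (phi c) :: 'a fls" and ?d = "fls_deriv (phi c) :: 'a fls"
  define a where "a k = fls_residue (F * ?d * ?w ^ (k+1))" for k
  assume Gn: "G $$ n \<noteq> 0"
  then have Gnz: "G \<noteq> 0" by auto
  define s where "s = fls_subdegree G"
  have sle: "s \<le> 0" using fls_subdegree_leI[OF Gn] n unfolding s_def by simp
  have "- int K \<le> s" unfolding s_def
  proof (rule fls_subdegree_geI[OF Gnz])
    fix k assume k: "k < - int K"
    have "\<forall>j\<in>{..K}. (?p ^ j) $$ k = 0" using k by (auto intro: phi_pow_nth_low)
    then show "G $$ k = 0" using k low by (simp add: G_def fls_nth_sum)
  qed
  define i where "i = nat (-s)"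
  have iK: "i \<le> K" and si: "int i = - s" using sle \<open>- int K \<le> s\<close> unfolding i_def by auto
  define Y where "Y = ?d * ?w ^ (i+1)"
  have "fls_residue (G * Y) = fls_residue (F * Y) + (\<Sum>k\<le>K. a k * fls_residue (?p ^ k * Y))"
    unfolding G_def a_def[symmetric] by (rule res_expand)
  also have "(\<Sum>k\<le>K. a k * fls_residue (?p ^ k * Y)) = (\<Sum>k\<le>K. a k * (if k = i then -1 else 0))"
    by (intro sum.cong refl) (simp only: Y_def mult.assoc[symmetric] res_R)
  also have "\<dots> = - a i" using iK by (simp add: if_distrib sum.delta cong: if_cong)
  also have "a i = fls_residue (F * Y)" unfolding a_def Y_def by (simp add: mult.assoc)
  finally have r0: "fls_residue (G * Y) = 0" by simp
  have wpow: "fls_subdegree (?w ^ (i+1)) = int i + 1" by (simp only: fls_subdegree_pow winv_subdeg) simp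
  have Ynz: "Y \<noteq> 0" unfolding Y_def using dphi_nz[of c] winv_nz[of c] phi_nz[of c] by simp
  have Ysub: "fls_subdegree Y = -1 - s" unfolding Y_def using dphi_nz[of c] winv_nz[of c] phi_nz[of c] si
    by (simp only: fls_subdegree_mult power_not_zero dphi_subdeg wpow inverse_nonzero_iff_nonzero)
  have Ylead: "Y $$ fls_subdegree Y = -1"
  proof -
    have "Y $$ fls_subdegree Y = ?d $$ fls_subdegree ?d * (?w ^ (i+1)) $$ fls_subdegree (?w ^ (i+1))"
      unfolding Y_def
      by (simp only: fls_subdegree_mult[OF dphi_nz power_not_zero[OF winv_nz]] fls_times_base)
    also have "(?w ^ (i+1)) $$ fls_subdegree (?w ^ (i+1)) = 1"
      using fls_pow_base[of ?w "i+1"] by (simp only: wpow winv_subdeg winv_lead) (simp add: add.commute)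
    finally show ?thesis by (simp add: dphi_subdeg phi_nth)
  qed
  have "fls_residue (G * Y) = G $$ s * Y $$ fls_subdegree Y"
    using fls_times_base[of G Y] Ysub unfolding s_def by simp
  then have "fls_residue (G * Y) = - G $$ s" using Ylead by simp
  moreover have "G $$ s \<noteq> 0" unfolding s_def using Gnz by simp
  ultimately show False using r0 by simp
qed

lemma cond_iff: "(X = 0 \<or> fls_subdegree X \<ge> 1) \<longleftrightarrow> (\<forall>n\<le>0. X $$ n = 0)"
proof
  assume "X = 0 \<or> fls_subdegree X \<ge> 1"
  then show "\<forall>n\<le>0. X $$ n = 0" by auto
next
  assume h: "\<forall>n\<le>0. X $$ n = 0"
  show "X = 0 \<or> fls_subdegree X \<ge> 1"
  proof (cases "X = 0")
    case False
    then have "1 \<le> fls_subdegree X" using h by (intro fls_subdegree_geI) auto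
    then show ?thesis by simp
  qed simp
qed

lemma poly_zero:
  fixes e :: "nat \<Rightarrow> 'a::field"
  assumes "\<forall>n\<le>0. (\<Sum>k\<le>N. fls_const (e k) * phi c ^ k) $$ n = 0"
  shows "(\<Sum>k\<le>N. fls_const (e k) * phi c ^ k) = 0"
  using assms
proof (induction N)
  case 0
  then have "e 0 = 0" by (auto dest: spec[of _ 0])
  then show ?case by simp
next
  case (Suc N)
  have "(\<Sum>k\<le>Suc N. fls_const (e k) * phi c ^ k) $$ (- int (Suc N)) = e (Suc N)"
  proof -
    have "\<forall>k\<in>{..N}. (phi c ^ k) $$ (- int (Suc N)) = 0" by (auto intro: phi_pow_nth_low)
    then show ?thesis by (simp add: fls_nth_sum phi_pow_nth_lead del: of_nat_Suc power_Suc)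
  qed
  moreover have "- int (Suc N) \<le> 0" by simp
  ultimately have "e (Suc N) = 0" using Suc.prems by metis
  then have eq: "(\<Sum>k\<le>Suc N. fls_const (e k) * phi c ^ k) = (\<Sum>k\<le>N. fls_const (e k) * phi c ^ k)"
    by simp
  from Suc.prems have "\<forall>n\<le>0. (\<Sum>k\<le>N. fls_const (e k) * phi c ^ k) $$ n = 0" by (simp only: eq)
  then have "(\<Sum>k\<le>N. fls_const (e k) * phi c ^ k) = 0" by (rule Suc.IH)
  then show ?case by (simp only: eq)
qed

lemma sum_ext_le:
  fixes f :: "nat \<Rightarrow> 'b::comm_monoid_add"
  assumes "N \<le> L"
  shows "(\<Sum>k\<le>N. f k) = (\<Sum>k\<le>L. if k \<le> N then f k else 0)"
proof -
  have "(\<Sum>k\<le>L. if k \<le> N then f k else 0) = sum f {k\<in>{..L}. k \<le> N}"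
    by (simp only: sum.inter_filter[OF finite_atMost])
  also have "{k\<in>{..L}. k \<le> N} = {..N}" using assms by auto
  finally show ?thesis by simp
qed

lemma nonneg_part_eq:
  fixes F :: "'a::field fls"
  assumes h: "\<forall>n\<le>0. (F - (\<Sum>k\<le>N. fls_const (e k) * phi c ^ k)) $$ n = 0"
  shows "phi_nonneg_part c F = (\<Sum>k\<le>N. fls_const (e k) * phi c ^ k)"
  unfolding phi_nonneg_part_def
proof (rule the_equality)
  show "(\<exists>N' d. (\<Sum>k\<le>N. fls_const (e k) * phi c ^ k) = (\<Sum>k\<le>N'. fls_const (d k) * phi c ^ k)) \<and>
    (F - (\<Sum>k\<le>N. fls_const (e k) * phi c ^ k) = 0 \<or> 1 \<le> fls_subdegree (F - (\<Sum>k\<le>N. fls_const (e k) * phi c ^ k)))"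
    using h by (auto simp only: cond_iff)
next
  fix q assume "(\<exists>M d. q = (\<Sum>k\<le>M. fls_const (d k) * phi c ^ k)) \<and> (F - q = 0 \<or> 1 \<le> fls_subdegree (F - q))"
  then obtain M d where q: "q = (\<Sum>k\<le>M. fls_const (d k) * phi c ^ k)" and hq: "\<forall>n\<le>0. (F - q) $$ n = 0"
    by (auto simp only: cond_iff)
  define L where "L = max N M"
  define E where "E k = (if k \<le> N then e k else 0) - (if k \<le> M then d k else 0)" for k
  have "(\<Sum>k\<le>N. fls_const (e k) * phi c ^ k) - q =
        (\<Sum>k\<le>L. (if k \<le> N then fls_const (e k) * phi c ^ k else 0)) - (\<Sum>k\<le>L. (if k \<le> M then fls_const (d k) * phi c ^ k else 0))"
    unfolding q L_def by (simp add: sum_ext_le[symmetric])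
  also have "\<dots> = (\<Sum>k\<le>L. fls_const (E k) * phi c ^ k)"
    unfolding sum_subtractf[symmetric]
    by (intro sum.cong refl) (auto simp: E_def fls_minus_const[symmetric] left_diff_distrib)
  finally have eqd: "(\<Sum>k\<le>N. fls_const (e k) * phi c ^ k) - q = (\<Sum>k\<le>L. fls_const (E k) * phi c ^ k)" .
  have "\<forall>n\<le>0. (\<Sum>k\<le>L. fls_const (E k) * phi c ^ k) $$ n = 0"
  proof (intro allI impI)
    fix n :: int assume "n \<le> 0"
    then have "(F - q) $$ n = 0" "(F - (\<Sum>k\<le>N. fls_const (e k) * phi c ^ k)) $$ n = 0" using h hq by auto
    then have "((\<Sum>k\<le>N. fls_const (e k) * phi c ^ k) - q) $$ n = 0" by simp
    then show "(\<Sum>k\<le>L. fls_const (E k) * phi c ^ k) $$ n = 0" by (simp only: eqd)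
  qed
  then have "(\<Sum>k\<le>L. fls_const (E k) * phi c ^ k) = 0" by (rule poly_zero)
  with eqd show "q = (\<Sum>k\<le>N. fls_const (e k) * phi c ^ k)" by simp
qed


lemma Xshift [simp]: "fls_shift k 1 * (f :: 'a::semiring_1 fls) = fls_shift k f"
  using fls_X_intpow_times_conv_shift(1)[of "-k" f] by simp

lemma Fj_low:
  fixes c :: "nat \<Rightarrow> 'a::field_char_0"
  shows "\<forall>n < - int (nat (j+3)). (fls_X_intpow (-1-j) * fls_deriv (phi c)) $$ n = 0"
  by (auto simp: fls_X_intpow_times_conv_shift phi_nth)

lemma Fj_res:
  fixes c :: "nat \<Rightarrow> 'a::field_char_0"
  shows "fls_residue (fls_X_intpow (-1-j) * fls_deriv (phi c) * Y) = (fls_deriv (phi c) * Y) $$ j"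
proof -
  have m: "-1-j = -j-1" by simp
  have e: "fls_X_intpow (-1-j) * fls_deriv (phi c) * Y = fls_X_intpow (-j-1) * (fls_deriv (phi c) * Y)"
    by (simp only: m mult.assoc)
  show ?thesis unfolding e by (rule fls_residue_shift_nth[symmetric])
qed

lemma fn_ser_eq:
  fixes c :: "nat \<Rightarrow> 'a::field_char_0"
  shows "fn_ser c (-1-j) = fls_X_intpow (-1-j) * fls_deriv (phi c) +
     (\<Sum>k\<le>nat (j+3). fls_const ((fls_deriv (phi c) ^ 2 * inverse (phi c) ^ (k+1)) $$ j) * phi c ^ k)"
    (is "_ = ?F + ?S")
proof -
  have ra: "fls_residue (?F * fls_deriv (phi c) * inverse (phi c) ^ (k+1)) =
        (fls_deriv (phi c) ^ 2 * inverse (phi c) ^ (k+1)) $$ j" for k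
    using Fj_res[of j c "fls_deriv (phi c) * inverse (phi c) ^ (k+1)"]
    by (simp add: mult.assoc power2_eq_square)
  have G0: "(?F + ?S) $$ n = 0" if "n \<le> 0" for n
    using core[where c=c, OF Fj_low[of j c], OF that] by (simp only: ra)
  have eqn: "?F - (\<Sum>k\<le>nat (j+3). fls_const (- (fls_deriv (phi c) ^ 2 * inverse (phi c) ^ (k+1)) $$ j) * phi c ^ k) = ?F + ?S"
    by (simp add: sum_negf[symmetric])
  have np: "phi_nonneg_part c ?F = (\<Sum>k\<le>nat (j+3). fls_const (- (fls_deriv (phi c) ^ 2 * inverse (phi c) ^ (k+1)) $$ j) * phi c ^ k)"
    by (intro nonneg_part_eq) (simp only: eqn, blast intro: G0)
  show ?thesis unfolding fn_ser_def phi_proj_def np by (simp add: sum_negf[symmetric])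
qed

lemma gen_f_nth: "gen_f c $$ j = (if j < -6 then 0 else fn_ser c (-1-j))"
  unfolding gen_f_def by (auto simp: fps_to_fls_nth)

lemma f_coef_nth: "f_coef c i $$ j = (if j < -6 then 0 else fn_ser c (-1-j) $$ i)"
  unfolding f_coef_def by (auto simp: fps_to_fls_nth)


definition Sser :: "'a::field fls fls" where
  "Sser = fps_to_fls (Abs_fps (\<lambda>m. fls_X_intpow (- int m - 1)))"

lemma Sser_nth: "Sser $$ n = (if n < 0 then 0 else fls_X_intpow (- n - 1))"
  unfolding Sser_def by (simp add: fps_to_fls_nth)

lemma inv_lam_xi: "inverse (fls_const (fls_X::'a::field fls) - fls_X) = Sser"
proof (rule inverse_unique, rule fls_eqI)
  fix n
  have X: "(fls_X :: 'a fls) = fls_X_intpow 1" by (simp add: fls_X_conv_shift_1)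
  show "((fls_const (fls_X::'a fls) - fls_X) * Sser) $$ n = (1::'a fls fls) $$ n"
    by (simp add: left_diff_distrib fls_X_times_conv_shift Sser_nth X
         fls_X_intpow_times_fls_X_intpow)
qed

lemma shift1_pow: "fls_shift k 1 ^ n = fls_shift (int n * k) (1::'a::semiring_1 fls)"
  using fls_X_intpow_power[of "-k" n] by simp

lemma lam_xi_pow: "(fls_const (fls_X::'a::field fls) / (fls_X :: 'a fls fls)) ^ 6 =
   fls_const (fls_X_intpow 6) * fls_X_intpow (-6)"
proof -
  have "fls_const (fls_X::'a fls) / (fls_X :: 'a fls fls) = fls_const fls_X * fls_X_intpow (-1)"
    by (simp add: divide_inverse fls_inverse_X fls_X_inv_conv_shift_1)
  then show ?thesis
    by (simp add: power_mult_distrib fls_const_power[symmetric] shift1_pow fls_X_power_conv_shift_1)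
qed

lemma T1_nth:
  fixes c :: "nat \<Rightarrow> 'a::field"
  shows "((fls_const (fls_X::'a fls) / (fls_X :: 'a fls fls)) ^ 6 * fls_const (fls_deriv (phi c))
     * inverse (fls_const fls_X - fls_X)) $$ j = (if j < -6 then 0 else fls_X_intpow (-1-j) * fls_deriv (phi c))"
proof -
  have "(fls_const (fls_X::'a fls) / (fls_X :: 'a fls fls)) ^ 6 * fls_const (fls_deriv (phi c))
     * inverse (fls_const fls_X - fls_X) = fls_const (fls_X_intpow 6 * fls_deriv (phi c)) * (fls_X_intpow (-6) * Sser)"
    by (simp only: lam_xi_pow inv_lam_xi fls_const_mult_const[symmetric] mult_ac)
  also have "\<dots> = fls_const (fls_X_intpow 6 * fls_deriv (phi c)) * fls_shift 6 Sser"
    by (simp only: fls_X_intpow_times_conv_shift) simp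
  finally have e: "(fls_const (fls_X::'a fls) / (fls_X :: 'a fls fls)) ^ 6 * fls_const (fls_deriv (phi c))
     * inverse (fls_const fls_X - fls_X) = fls_const (fls_X_intpow 6 * fls_deriv (phi c)) * fls_shift 6 Sser" .
  show ?thesis unfolding e fls_mult_const_nth fls_shift_nth Sser_nth
    by (auto simp: mult_ac add.commute)
qed

lemma T2_nth:
  fixes c :: "nat \<Rightarrow> 'a::field_char_0"
  shows "(fls_deriv (phi (\<lambda>k. fls_const (c k))) ^ 2 * inverse (phi (\<lambda>k. fls_const (c k)) - fls_const (phi c))) $$ j
   = (\<Sum>k\<le>nat (j+3). fls_const ((fls_deriv (phi c) ^ 2 * inverse (phi c) ^ (k+1)) $$ j) * phi c ^ k)"
proof -
  let ?p = "phi c :: 'a fls" and ?w = "inverse (phi c) :: 'a fls" and ?d = "fls_deriv (phi c) :: 'a fls"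
  define P where "P = cmap ?p"
  define W where "W = cmap ?w"
  define D where "D = cmap ?d"
  define q where "q = fls_const ?p * W"
  define K where "K = nat (j+3)"
  define L where "L = Suc K"
  have Pnz: "P \<noteq> 0" unfolding P_def using phi_nz[of c] by simp
  have WP: "W = inverse P" unfolding W_def P_def by simp
  have Wnz: "W \<noteq> 0" using Pnz WP by simp
  have Dnz: "D \<noteq> 0" unfolding D_def using dphi_nz[of c] by simp
  have PW: "P * W = 1" using Pnz WP by (simp add: right_inverse)
  have f1: "P - fls_const ?p = P * (1 - q)"
    unfolding q_def by (simp add: right_diff_distrib mult.left_commute[of P] PW)
  have qsub: "fls_subdegree q = 1" and qnz: "q \<noteq> 0"
    unfolding q_def W_def using phi_nz[of c] winv_nz[of c] by (simp_all add: phi_subdeg)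
  have q0: "(1 - q) $$ 0 = 1" using qsub by simp
  then have oqnz: "1 - q \<noteq> 0" by auto
  have oqsub: "fls_subdegree (1 - q) \<le> 0" using q0 by (intro fls_subdegree_leI) simp
  define I where "I = inverse (1 - q)"
  have Isub: "0 \<le> fls_subdegree I" unfolding I_def using oqsub by simp
  have geo: "I = (\<Sum>i<L. q ^ i) + q ^ L * I"
  proof -
    have "I * (1 - q ^ L) = I * (1 - q) * (\<Sum>i<L. q ^ i)"
      by (simp only: one_diff_power_eq mult.assoc)
    also have "I * (1 - q) = 1" unfolding I_def using oqnz by simp
    finally have "I * (1 - q ^ L) = (\<Sum>i<L. q ^ i)" by simp
    then show ?thesis by (simp add: algebra_simps)
  qed
  have T2: "fls_deriv (phi (\<lambda>k. fls_const (c k))) ^ 2 * inverse (phi (\<lambda>k. fls_const (c k)) - fls_const (phi c))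
     = D^2 * W * (\<Sum>i<L. q ^ i) + D^2 * W * q ^ L * I"
  proof -
    have "fls_deriv (phi (\<lambda>k. fls_const (c k))) = D" unfolding D_def by (simp add: cmap_phi cmap_deriv)
    moreover have "phi (\<lambda>k. fls_const (c k)) = P" unfolding P_def by (simp add: cmap_phi)
    ultimately have "fls_deriv (phi (\<lambda>k. fls_const (c k))) ^ 2 * inverse (phi (\<lambda>k. fls_const (c k)) - fls_const (phi c))
        = D^2 * (W * I)" by (simp add: f1 I_def WP inverse_mult_distrib)
    also have "\<dots> = D^2 * W * (\<Sum>i<L. q ^ i) + D^2 * W * q ^ L * I"
      by (subst geo) (simp add: algebra_simps)
    finally show ?thesis .
  qed
  have rem: "(D^2 * W * q ^ L * I) $$ j = 0"
  proof (rule fls_times_nth_eq0)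
    have "fls_subdegree (D^2 * W * q ^ L) = 2 * fls_subdegree D + fls_subdegree W + int L * fls_subdegree q"
      using Dnz Wnz qnz by (simp add: fls_subdegree_pow)
    also have "\<dots> = int L - 3" unfolding D_def W_def
      by (simp add: dphi_subdeg phi_subdeg qsub)
    finally show "j < fls_subdegree (D^2 * W * q ^ L) + fls_subdegree I"
      using Isub unfolding L_def K_def by linarith
  qed
  have trm: "(D^2 * W * q ^ i) $$ j = ?p ^ i * fls_const ((?d ^ 2 * ?w ^ (i+1)) $$ j)" for i
  proof -
    have "D^2 * W * q ^ i = fls_const (?p ^ i) * cmap (?d ^ 2 * ?w ^ (i+1))"
      unfolding D_def W_def q_def by (simp add: power_mult_distrib fls_const_power algebra_simps)
    then show ?thesis by (simp only: fls_mult_const_nth cmap_nth)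
  qed
  have "(D^2 * W * (\<Sum>i<L. q ^ i)) $$ j = (\<Sum>i<L. (D^2 * W * q ^ i) $$ j)"
    by (simp add: sum_distrib_left fls_nth_sum)
  also have "\<dots> = (\<Sum>k\<le>K. fls_const ((?d ^ 2 * ?w ^ (k+1)) $$ j) * ?p ^ k)"
    unfolding L_def lessThan_Suc_atMost trm by (simp add: mult.commute)
  finally show ?thesis unfolding T2 K_def using rem by simp
qed


lemma a_zero:
  fixes c :: "nat \<Rightarrow> 'a::field_char_0"
  assumes "j < -3"
  shows "(fls_deriv (phi c) ^ 2 * inverse (phi c) ^ (k+1)) $$ j = 0"
proof (rule fls_times_nth_eq0)
  have "fls_subdegree (inverse (phi c) ^ (k+1)) = int k + 1"
    by (simp only: fls_subdegree_pow winv_subdeg) simp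
  moreover have "fls_subdegree (fls_deriv (phi c) ^ 2) = -4"
    by (simp add: fls_subdegree_pow dphi_subdeg)
  ultimately show "j < fls_subdegree (fls_deriv (phi c) ^ 2) + fls_subdegree (inverse (phi c) ^ (k+1))"
    using assms by simp
qed

lemma d2_low:
  fixes c :: "nat \<Rightarrow> 'a::field_char_0"
  assumes "j < -4 - int m"
  shows "(fls_deriv (phi c) ^ 2 * phi c ^ m) $$ j = 0"
  by (rule fls_times_nth_eq0) (use assms in \<open>simp add: fls_subdegree_pow dphi_subdeg phi_subdeg\<close>)

theorem part1:
  fixes c :: "nat \<Rightarrow> 'a::field_char_0"
  shows "gen_f c = (fls_const (fls_X::'a fls) / (fls_X :: 'a fls fls)) ^ 6 * fls_const (fls_deriv (phi c))
     * inverse (fls_const fls_X - fls_X) +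
     fls_deriv (phi (\<lambda>k. fls_const (c k))) ^ 2 * inverse (phi (\<lambda>k. fls_const (c k)) - fls_const (phi c))"
proof (rule fls_eqI)
  fix j
  show "gen_f c $$ j = ((fls_const (fls_X::'a fls) / (fls_X :: 'a fls fls)) ^ 6 * fls_const (fls_deriv (phi c))
     * inverse (fls_const fls_X - fls_X) +
     fls_deriv (phi (\<lambda>k. fls_const (c k))) ^ 2 * inverse (phi (\<lambda>k. fls_const (c k)) - fls_const (phi c))) $$ j"
  proof (cases "j < -6")
    case True
    then show ?thesis
      by (simp only: fls_plus_nth gen_f_nth T1_nth T2_nth a_zero if_True) simp
  next
    case False
    then show ?thesis
      by (simp only: fls_plus_nth gen_f_nth T1_nth T2_nth fn_ser_eq if_False)
  qed
qed

lemma fn_ser_low: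
  fixes c :: "nat \<Rightarrow> 'a::field_char_0"
  assumes "n \<le> 0"
  shows "fn_ser c (-1-j) $$ n = 0"
proof -
  let ?F = "fls_X_intpow (-1-j) * fls_deriv (phi c)"
  have ra: "fls_residue (?F * fls_deriv (phi c) * inverse (phi c) ^ (k+1)) =
        (fls_deriv (phi c) ^ 2 * inverse (phi c) ^ (k+1)) $$ j" for k
    using Fj_res[of j c "fls_deriv (phi c) * inverse (phi c) ^ (k+1)"]
    by (simp add: mult.assoc power2_eq_square)
  show ?thesis unfolding fn_ser_eq
    using core[where c=c, OF Fj_low[of j c], OF assms] by (simp only: ra)
qed

lemma fn_ser_res:
  fixes c :: "nat \<Rightarrow> 'a::field_char_0"
  shows "fls_residue (fn_ser c (-1-j) * (fls_deriv (phi c) * phi c ^ m)) =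
         (fls_deriv (phi c) * (fls_deriv (phi c) * phi c ^ m)) $$ j"
proof -
  have z: "fls_residue (phi c ^ k * (fls_deriv (phi c) * phi c ^ m)) = 0" for k
  proof -
    have "phi c ^ k * (fls_deriv (phi c) * phi c ^ m) = phi c ^ (k+m) * fls_deriv (phi c)"
      by (simp add: power_add mult_ac)
    then show ?thesis using res_dphi_pow[where c=c and m="k+m"] by (simp only:)
  qed
  show ?thesis unfolding fn_ser_eq res_expand z Fj_res by simp
qed


lemma phi_low: "n < -1 \<Longrightarrow> phi c $$ n = 0"
  by (simp add: phi_nth)

lemma d_low: "n < -2 \<Longrightarrow> fls_deriv (phi c) $$ n = (0::'a::field_char_0)"
  by (simp add: phi_nth)

lemma dd_vals:
  fixes c :: "nat \<Rightarrow> 'a::field_char_0"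
  shows "fls_deriv (phi c) $$ (-2) = -1" "fls_deriv (phi c) $$ (-1) = 0" "fls_deriv (phi c) $$ 0 = c 1"
  by (simp_all add: phi_nth)

lemma p_vals:
  shows "phi c $$ (-1) = 1" "phi c $$ 0 = 0" "phi c $$ 1 = c 1"
  by (simp_all add: phi_nth)

lemma dphi1_vals:
  fixes c :: "nat \<Rightarrow> 'a::field_char_0"
  shows "(fls_deriv (phi c) * phi c) $$ (-3) = -1" "(fls_deriv (phi c) * phi c) $$ (-2) = 0"
proof -
  have e: "(fls_deriv (phi c) * phi c) $$ n = (\<Sum>i=-2..n - -1. fls_deriv (phi c) $$ i * phi c $$ (n-i))" for n
    by (rule fls_times_nth_bounds) (auto simp: phi_nth)
  have s1: "{-2..-3 - -1::int} = {-2}" by auto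
  have s2: "{-2..-2 - -1::int} = {-2,-1}" by auto
  show "(fls_deriv (phi c) * phi c) $$ (-3) = -1" unfolding e s1 by (simp add: phi_nth)
  show "(fls_deriv (phi c) * phi c) $$ (-2) = 0" unfolding e s2 by (simp add: phi_nth)
qed

lemma pp_vals:
  fixes c :: "nat \<Rightarrow> 'a::field_char_0"
  shows "(phi c * phi c) $$ (-2) = 1" "(phi c * phi c) $$ (-1) = 0" "(phi c * phi c) $$ 0 = 2 * c 1"
proof -
  have e: "(phi c * phi c) $$ n = (\<Sum>i=-1..n - -1. phi c $$ i * phi c $$ (n-i))" for n
    by (rule fls_times_nth_bounds) (auto simp: phi_nth)
  have s1: "{-1..-2 - -1::int} = {-1}" by auto
  have s2: "{-1..-1 - -1::int} = {-1,0}" by auto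
  have s3: "{-1..0 - -1::int} = {-1,0,1}" by auto
  show "(phi c * phi c) $$ (-2) = 1" unfolding e s1 by (simp add: p_vals)
  show "(phi c * phi c) $$ (-1) = 0" unfolding e s2 by (simp add: phi_nth)
  show "(phi c * phi c) $$ 0 = 2 * c 1" unfolding e s3 by (simp add: phi_nth)
qed

lemma dphi2_vals:
  fixes c :: "nat \<Rightarrow> 'a::field_char_0"
  shows "(fls_deriv (phi c) * phi c ^ 2) $$ (-4) = -1" "(fls_deriv (phi c) * phi c ^ 2) $$ (-3) = 0"
        "(fls_deriv (phi c) * phi c ^ 2) $$ (-2) = - c 1"
proof -
  have low: "\<forall>n < -2. (phi c * phi c) $$ n = 0"
    by (auto intro!: fls_times_nth_eq0 simp: phi_subdeg)
  have e: "(fls_deriv (phi c) * phi c ^ 2) $$ n = (\<Sum>i=-2..n - -2. fls_deriv (phi c) $$ i * (phi c * phi c) $$ (n-i))" for n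
    unfolding power2_eq_square by (rule fls_times_nth_bounds) (use low in \<open>auto simp: phi_nth\<close>)
  have s1: "{-2..-4 - -2::int} = {-2}" by auto
  have s2: "{-2..-3 - -2::int} = {-2,-1}" by auto
  have s3: "{-2..-2 - -2::int} = {-2,-1,0}" by auto
  show "(fls_deriv (phi c) * phi c ^ 2) $$ (-4) = -1" unfolding e s1 by (simp add: dd_vals pp_vals p_vals)
  show "(fls_deriv (phi c) * phi c ^ 2) $$ (-3) = 0" unfolding e s2 by (simp add: dd_vals pp_vals p_vals)
  show "(fls_deriv (phi c) * phi c ^ 2) $$ (-2) = - c 1" unfolding e s3 by (simp add: dd_vals pp_vals p_vals)
qed

lemma G_vals:
  fixes c :: "nat \<Rightarrow> 'a::field_char_0"
  shows "fn_ser c (-1-j) $$ 1 = - (fls_deriv (phi c) * fls_deriv (phi c)) $$ j"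
    "fn_ser c (-1-j) $$ 2 = - (fls_deriv (phi c) * (fls_deriv (phi c) * phi c)) $$ j"
    "fn_ser c (-1-j) $$ 3 = c 1 * (fls_deriv (phi c) * fls_deriv (phi c)) $$ j
        - (fls_deriv (phi c) * (fls_deriv (phi c) * phi c ^ 2)) $$ j"
proof -
  let ?G = "fn_ser c (-1-j)" and ?d = "fls_deriv (phi c)" and ?p = "phi c"
  have G0: "\<forall>n<1. ?G $$ n = 0" using fn_ser_low[of _ c j] by auto
  have r0: "fls_residue (?G * ?d) = (?d * ?d) $$ j"
    using fn_ser_res[of c j 0] by simp
  have r1: "fls_residue (?G * (?d * ?p)) = (?d * (?d * ?p)) $$ j"
    using fn_ser_res[of c j 1] by simp
  have r2: "fls_residue (?G * (?d * ?p ^ 2)) = (?d * (?d * ?p ^ 2)) $$ j"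
    using fn_ser_res[of c j 2] by simp
  have l0: "\<forall>n < -2. ?d $$ n = 0" by (auto simp: phi_nth)
  have l1: "\<forall>n < -3. (?d * ?p) $$ n = 0"
    by (auto intro!: fls_times_nth_eq0 simp: phi_subdeg dphi_subdeg)
  have l2: "\<forall>n < -4. (?d * ?p ^ 2) $$ n = 0"
    by (auto intro!: fls_times_nth_eq0 simp: phi_subdeg dphi_subdeg fls_subdegree_pow)
  have e0: "fls_residue (?G * ?d) = (\<Sum>i=1..-1 - -2. ?G $$ i * ?d $$ (-1-i))"
    unfolding fls_residue_def by (rule fls_times_nth_bounds[OF G0 l0])
  have e1: "fls_residue (?G * (?d * ?p)) = (\<Sum>i=1..-1 - -3. ?G $$ i * (?d * ?p) $$ (-1-i))"
    unfolding fls_residue_def by (rule fls_times_nth_bounds[OF G0 l1])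
  have e2: "fls_residue (?G * (?d * ?p ^ 2)) = (\<Sum>i=1..-1 - -4. ?G $$ i * (?d * ?p ^ 2) $$ (-1-i))"
    unfolding fls_residue_def by (rule fls_times_nth_bounds[OF G0 l2])
  have s0: "{1..-1 - -2::int} = {1}" by auto
  have s1: "{1..-1 - -3::int} = {1,2}" by auto
  have s2: "{1..-1 - -4::int} = {1,2,3}" by auto
  have v0: "fls_residue (?G * ?d) = - ?G $$ 1" unfolding e0 s0 by (simp add: dd_vals p_vals)
  have v1: "fls_residue (?G * (?d * ?p)) = - ?G $$ 2" unfolding e1 s1 by (simp add: dphi1_vals)
  have v2: "fls_residue (?G * (?d * ?p ^ 2)) = - c 1 * ?G $$ 1 - ?G $$ 3"
    unfolding e2 s2 by (simp add: dphi2_vals)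
  show g1: "?G $$ 1 = - (?d * ?d) $$ j" using r0 v0 by simp
  show "?G $$ 2 = - (?d * (?d * ?p)) $$ j" using r1 v1 by simp
  show "?G $$ 3 = c 1 * (?d * ?d) $$ j - (?d * (?d * ?p ^ 2)) $$ j"
    using r2 v2 g1 by (simp add: algebra_simps)
qed


theorem mainTheorem14:
  fixes c :: "nat \<Rightarrow> 'a::field_char_0"
  defines "lam \<equiv> (fls_const (fls_X :: 'a fls) :: 'a fls fls)"
      and "xi \<equiv> (fls_X :: 'a fls fls)"
      and "phiL \<equiv> fls_const (phi c) :: 'a fls fls"
      and "phiL' \<equiv> fls_const (fls_deriv (phi c)) :: 'a fls fls"
      and "phiX \<equiv> phi (\<lambda>k. fls_const (c k)) :: 'a fls fls"
  shows "(gen_f c = (lam / xi) ^ 6 * phiL' * inverse (lam - xi)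
                   + (fls_deriv phiX) ^ 2 * inverse (phiX - phiL)) \<and>
    (f_coef c 1 = - ((fls_deriv (phi c)) ^ 2)) \<and>
    (f_coef c 2 = - ((fls_deriv (phi c)) ^ 2 * phi c)) \<and>
    (f_coef c 3 = (fls_deriv (phi c)) ^ 2 * (fls_const (c 1) - (phi c) ^ 2))"
  unfolding lam_def xi_def phiL_def phiL'_def phiX_def
proof (intro conjI)
  let ?d = "fls_deriv (phi c)" and ?p = "phi c"
  show "gen_f c = (fls_const fls_X / fls_X) ^ 6 * fls_const ?d * inverse (fls_const fls_X - fls_X) +
    (fls_deriv (phi (\<lambda>k. fls_const (c k))))\<^sup>2 * inverse (phi (\<lambda>k. fls_const (c k)) - fls_const ?p)"
    by (rule part1)
  show "f_coef c 1 = - (?d ^ 2)"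
  proof (rule fls_eqI)
    fix j
    show "f_coef c 1 $$ j = (- (?d ^ 2)) $$ j"
    proof (cases "j < -6")
      case True
      have "(?d ^ 2 * ?p ^ 0) $$ j = 0" by (rule d2_low) (use True in simp)
      then show ?thesis using True by (simp add: f_coef_nth)
    next
      case False
      then show ?thesis by (simp add: f_coef_nth G_vals power2_eq_square)
    qed
  qed
  show "f_coef c 2 = - (?d ^ 2 * ?p)"
  proof (rule fls_eqI)
    fix j
    show "f_coef c 2 $$ j = (- (?d ^ 2 * ?p)) $$ j"
    proof (cases "j < -6")
      case True
      have "(?d ^ 2 * ?p ^ 1) $$ j = 0" by (rule d2_low) (use True in simp)
      then show ?thesis using True by (simp add: f_coef_nth)
    next
      case False
      then show ?thesis by (simp add: f_coef_nth G_vals power2_eq_square mult.assoc)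
    qed
  qed
  show "f_coef c 3 = ?d ^ 2 * (fls_const (c 1) - ?p ^ 2)"
  proof (rule fls_eqI)
    fix j
    have e: "(?d ^ 2 * (fls_const (c 1) - ?p ^ 2)) $$ j = (?d ^ 2 * ?p ^ 0) $$ j * c 1 - (?d ^ 2 * ?p ^ 2) $$ j"
      by (simp add: right_diff_distrib)
    show "f_coef c 3 $$ j = (?d ^ 2 * (fls_const (c 1) - ?p ^ 2)) $$ j"
    proof (cases "j < -6")
      case True
      have "(?d ^ 2 * ?p ^ 0) $$ j = 0" by (rule d2_low) (use True in simp)
      moreover have "(?d ^ 2 * ?p ^ 2) $$ j = 0" by (rule d2_low) (use True in simp)
      ultimately show ?thesis unfolding e using True by (simp add: f_coef_nth)
    next
      case False
      then show ?thesis unfolding e by (simp add: f_coef_nth G_vals power2_eq_square mult_ac)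
    qed
  qed
qed

end
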